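(* There exists a closed algebra on $\mathbb{N}$ whose clone of term operations is not a Borel subset of $\mathscr{O}$. Moreover, this algebra can be chosen so that all of its fundamental operations are unary.
   Context: Let $\mathbb{N}=\{0,1,2,\dots\}$. For $n\ge 1$ let $\mathscr{O}^{(n)}=\mathbb{N}^{\mathbb{N}^n}$ be the set of all $n$-ary functions on $\mathbb{N}$, and $\mathscr{O}=\bigcup_{n\ge1}\mathscr{O}^{(n)}$. Each $\mathscr{O}^{(n)}$ carries the product topology of the discrete topology on $\mathbb{N}$ (so it is homeomorphic to the Baire space), and $\mathscr{O}$ carries the sum (disjoint union) topology; $\mathscr{O}$ is a Polish space. A clone is a subset of $\mathscr{O}$ containing all projections and closed under composition. An algebra on $\mathbb{N}$ is given by a set $\mathscr{F}\subseteq\mathscr{O}$ of fundamental operations; it is called closed (resp. Borel) if $\mathscr{F}$ is a closed (resp. Borel) subset of $\mathscr{O}$. Its clone of term operations is the smallest clone containing $\mathscr{F}$. *)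

theory Defs
  imports "HOL-Analysis.Analysis"
begin

text \<open>An operation on the natural numbers is represented as a pair (n, f): its arity n \<ge> 1
  and a function f on lists; only the values of f on lists of length n matter, and we
  normalise f to be 0 on lists of any other length, so that O^(n) corresponds bijectively
  to N^(N^n).\<close>

type_synonym op = "nat \<times> (nat list \<Rightarrow> nat)"

definition Ops :: "op set" where
  "Ops = {(n, f). n \<ge> 1 \<and> (\<forall>xs. length xs \<noteq> n \<longrightarrow> f xs = 0)}"

text \<open>Open sets of the sum (over n) of the product topologies of discrete N on N^(N^n):
  a subset U of Ops is open iff around every member (n,f) it contains a basic
  neighbourhood, i.e. all n-ary g agreeing with f on a finite set of n-tuples.\<close>

definition openO :: "op set \<Rightarrow> bool" where
  "openO U \<longleftrightarrow> U \<subseteq> Ops \<and>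
     (\<forall>n f. (n, f) \<in> U \<longrightarrow>
        (\<exists>S. finite S \<and> (\<forall>xs\<in>S. length xs = n) \<and>
             (\<forall>g. (n, g) \<in> Ops \<and> (\<forall>xs\<in>S. g xs = f xs) \<longrightarrow> (n, g) \<in> U)))"

definition closedO :: "op set \<Rightarrow> bool" where
  "closedO F \<longleftrightarrow> F \<subseteq> Ops \<and> openO (Ops - F)"

definition borelO :: "op set \<Rightarrow> bool" where
  "borelO B \<longleftrightarrow> B \<in> sigma_sets Ops {U. openO U}"

definition proj :: "nat \<Rightarrow> nat \<Rightarrow> op" where
  "proj n i = (n, \<lambda>xs. if length xs = n then xs ! i else 0)"

definition comp_op :: "op \<Rightarrow> nat \<Rightarrow> (nat list \<Rightarrow> nat) list \<Rightarrow> op" where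
  "comp_op F m gs = (m, \<lambda>xs. if length xs = m then snd F (map (\<lambda>g. g xs) gs) else 0)"

definition is_clone :: "op set \<Rightarrow> bool" where
  "is_clone C \<longleftrightarrow> C \<subseteq> Ops \<and>
     (\<forall>n i. 1 \<le> n \<and> i < n \<longrightarrow> proj n i \<in> C) \<and>
     (\<forall>n f m gs. (n, f) \<in> C \<and> length gs = n \<and> (\<forall>g\<in>set gs. (m, g) \<in> C)
         \<longrightarrow> comp_op (n, f) m gs \<in> C)"

definition term_clone :: "op set \<Rightarrow> op set" where
  "term_clone F = \<Inter>{C. is_clone C \<and> F \<subseteq> C}"

end

theory Submission
  imports Defs "HOL-Library.Countable" "HOL-Library.Infinite_Set"
begin

definition pre :: "(nat \<Rightarrow> nat) \<Rightarrow> nat \<Rightarrow> nat list" where "pre x n = map x [0..<n]"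
definition agree :: "nat \<Rightarrow> (nat\<Rightarrow>nat) \<Rightarrow> (nat\<Rightarrow>nat) \<Rightarrow> bool" where
  "agree N x x' \<longleftrightarrow> (\<forall>i<N. x i = x' i)"
definition closedP :: "((nat\<Rightarrow>nat) \<times> (nat\<Rightarrow>nat)) set \<Rightarrow> bool" where
  "closedP K \<longleftrightarrow> (\<forall>x y. (x,y) \<notin> K \<longrightarrow> (\<exists>N. \<forall>x' y'. agree N x x' \<and> agree N y y' \<longrightarrow> (x',y') \<notin> K))"
definition analytic :: "(nat\<Rightarrow>nat) set \<Rightarrow> bool" where
  "analytic A \<longleftrightarrow> (\<exists>K. closedP K \<and> A = {x. \<exists>y. (x,y) \<in> K})"
definition openN :: "(nat\<Rightarrow>nat) set \<Rightarrow> bool" where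
  "openN V \<longleftrightarrow> (\<forall>x\<in>V. \<exists>N. \<forall>x'. agree N x x' \<longrightarrow> x' \<in> V)"

lemma analytic_closed_compl: assumes "openN V" shows "analytic (-V)"
  unfolding analytic_def
proof (intro exI conjI)
  show "closedP {(x,y). x \<notin> V}" using assms unfolding closedP_def openN_def by fastforce
  show "-V = {x. \<exists>y. (x,y) \<in> {(x,y). x \<notin> V}}" by auto
qed

lemma analytic_open: assumes "openN V" shows "analytic V"
  unfolding analytic_def
proof (intro exI conjI)
  let ?K = "{(x,y::nat\<Rightarrow>nat). \<forall>x'. agree (y 0) x x' \<longrightarrow> x' \<in> V}"
  show "closedP ?K" unfolding closedP_def
  proof (intro allI impI)
    fix x y assume "(x,y) \<notin> ?K"
    then obtain x' where x': "agree (y 0) x x'" "x' \<notin> V" by auto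
    show "\<exists>N. \<forall>x'' y''. agree N x x'' \<and> agree N y y'' \<longrightarrow> (x'',y'') \<notin> ?K"
    proof (intro exI allI impI)
      fix x'' y'' assume a: "agree (Suc (y 0)) x x'' \<and> agree (Suc (y 0)) y y''"
      then have "y'' 0 = y 0" by (simp add: agree_def)
      moreover have "agree (y 0) x'' x'" using a x'(1) by (auto simp add: agree_def)
      ultimately show "(x'',y'') \<notin> ?K" using x'(2) by auto
    qed
  qed
  show "V = {x. \<exists>y. (x,y) \<in> ?K}"
  proof
    show "V \<subseteq> {x. \<exists>y. (x,y) \<in> ?K}"
    proof
      fix x assume "x \<in> V"
      then obtain N where "\<forall>x'. agree N x x' \<longrightarrow> x' \<in> V" using assms openN_def by auto
      then show "x \<in> {x. \<exists>y. (x,y) \<in> ?K}" by (intro CollectI exI[of _ "\<lambda>_. N"]) auto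
    qed
    show "{x. \<exists>y. (x,y) \<in> ?K} \<subseteq> V" by (auto simp: agree_def)
  qed
qed

lemma analytic_UN: assumes "\<And>i::nat. analytic (A i)" shows "analytic (\<Union>i. A i)"
proof -
  from assms obtain Kf where Kf1: "\<And>i. closedP (Kf i)" and Kf2: "\<And>i. A i = {x. \<exists>y. (x,y) \<in> Kf i}"
    unfolding analytic_def by metis
  let ?K = "{(x,y). (x, \<lambda>n. y (Suc n)) \<in> Kf (y 0)}"
  have "closedP ?K" unfolding closedP_def
  proof (intro allI impI)
    fix x y assume "(x,y) \<notin> ?K"
    then have "(x, \<lambda>n. y (Suc n)) \<notin> Kf (y 0)" by simp
    then obtain N where N: "\<forall>x' y'. agree N x x' \<and> agree N (\<lambda>n. y (Suc n)) y' \<longrightarrow> (x',y') \<notin> Kf (y 0)"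
      using Kf1 unfolding closedP_def by blast
    show "\<exists>N. \<forall>x' y'. agree N x x' \<and> agree N y y' \<longrightarrow> (x',y') \<notin> ?K"
    proof (intro exI allI impI)
      fix x' y' assume a: "agree (Suc N) x x' \<and> agree (Suc N) y y'"
      then have "y' 0 = y 0" "agree N x x'" "agree N (\<lambda>n. y (Suc n)) (\<lambda>n. y' (Suc n))"
        by (auto simp: agree_def)
      then show "(x',y') \<notin> ?K" using N by auto
    qed
  qed
  moreover have "(\<Union>i. A i) = {x. \<exists>y. (x,y) \<in> ?K}"
  proof
    show "(\<Union>i. A i) \<subseteq> {x. \<exists>y. (x,y) \<in> ?K}"
    proof
      fix x assume "x \<in> (\<Union>i. A i)"
      then obtain i y where "(x,y) \<in> Kf i" using Kf2 by auto
      then show "x \<in> {x. \<exists>y. (x,y) \<in> ?K}" by (intro CollectI exI[of _ "case_nat i y"]) simp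
    qed
    show "{x. \<exists>y. (x,y) \<in> ?K} \<subseteq> (\<Union>i. A i)" using Kf2 by auto
  qed
  ultimately show ?thesis unfolding analytic_def by blast
qed

lemma analytic_INT: assumes "\<And>i::nat. analytic (A i)" shows "analytic (\<Inter>i. A i)"
proof -
  from assms obtain Kf where Kf1: "\<And>i. closedP (Kf i)" and Kf2: "\<And>i. A i = {x. \<exists>y. (x,y) \<in> Kf i}"
    unfolding analytic_def by metis
  let ?K = "{(x,y). \<forall>k. (x, \<lambda>i. y (prod_encode (k,i))) \<in> Kf k}"
  have "closedP ?K" unfolding closedP_def
  proof (intro allI impI)
    fix x y assume "(x,y) \<notin> ?K"
    then obtain k where "(x, \<lambda>i. y (prod_encode (k,i))) \<notin> Kf k" by auto
    then obtain N where N: "\<forall>x' y'. agree N x x' \<and> agree N (\<lambda>i. y (prod_encode (k,i))) y' \<longrightarrow> (x',y') \<notin> Kf k"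
      using Kf1 unfolding closedP_def by blast
    define M where "M = Suc (Max (insert 0 ((\<lambda>i. prod_encode (k,i)) ` {..<N}))) + N"
    have bnd: "prod_encode (k,i) < M" if "i < N" for i
    proof -
      have "prod_encode (k,i) \<le> Max (insert 0 ((\<lambda>i. prod_encode (k,i)) ` {..<N}))"
        using that by (intro Max_ge) auto
      then show ?thesis unfolding M_def by linarith
    qed
    show "\<exists>N. \<forall>x' y'. agree N x x' \<and> agree N y y' \<longrightarrow> (x',y') \<notin> ?K"
    proof (intro exI allI impI)
      fix x' y' assume a: "agree M x x' \<and> agree M y y'"
      then have "agree N x x'" unfolding M_def agree_def by auto
      moreover have "agree N (\<lambda>i. y (prod_encode (k,i))) (\<lambda>i. y' (prod_encode (k,i)))"
        using a bnd unfolding agree_def by auto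
      ultimately show "(x',y') \<notin> ?K" using N by auto
    qed
  qed
  moreover have "(\<Inter>i. A i) = {x. \<exists>y. (x,y) \<in> ?K}"
  proof
    show "(\<Inter>i. A i) \<subseteq> {x. \<exists>y. (x,y) \<in> ?K}"
    proof
      fix x assume "x \<in> (\<Inter>i. A i)"
      then have "\<forall>k. \<exists>y. (x,y) \<in> Kf k" using Kf2 by auto
      then obtain yf where yf: "\<And>k. (x, yf k) \<in> Kf k" by metis
      show "x \<in> {x. \<exists>y. (x,y) \<in> ?K}"
        by (intro CollectI exI[of _ "\<lambda>j. yf (fst (prod_decode j)) (snd (prod_decode j))"]) (simp add: yf)
    qed
    show "{x. \<exists>y. (x,y) \<in> ?K} \<subseteq> (\<Inter>i. A i)" using Kf2 by auto
  qed
  ultimately show ?thesis unfolding analytic_def by blast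
qed

definition CC :: "((nat\<Rightarrow>nat) \<times> (nat\<Rightarrow>nat)) set" where
  "CC = {(x,y). \<forall>n. x (to_nat (pre x n, pre y n)) = 0}"
definition DD where "DD = {x. \<exists>y. (x,y) \<in> CC}"

lemma pre_eq_agree: "pre x n = pre x' n \<Longrightarrow> agree n x x'"
  unfolding pre_def agree_def by (metis add_0 diff_zero nth_map_upt)

lemma not_analytic_compl_DD: "\<not> analytic (-DD)"
proof
  assume "analytic (-DD)"
  then obtain K where K1: "closedP K" and K2: "-DD = {x. \<exists>y. (x,y) \<in> K}" unfolding analytic_def by blast
  define T where "T = {(s,t). \<exists>x y. (x,y) \<in> K \<and> pre x (length s) = s \<and> pre y (length t) = t}"
  have keyK: "(x,y) \<in> K \<longleftrightarrow> (\<forall>n. (pre x n, pre y n) \<in> T)" for x y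
  proof
    assume "(x,y) \<in> K" then show "\<forall>n. (pre x n, pre y n) \<in> T" unfolding T_def pre_def by auto
  next
    assume h: "\<forall>n. (pre x n, pre y n) \<in> T"
    show "(x,y) \<in> K"
    proof (rule ccontr)
      assume "(x,y) \<notin> K"
      then obtain N where N: "\<forall>x' y'. agree N x x' \<and> agree N y y' \<longrightarrow> (x',y') \<notin> K"
        using K1 unfolding closedP_def by blast
      from h have "(pre x N, pre y N) \<in> T" by blast
      then obtain x' y' where "(x',y') \<in> K" "pre x' N = pre x N" "pre y' N = pre y N"
        unfolding T_def pre_def by auto
      then show False using N pre_eq_agree by metis
    qed
  qed
  define c :: "nat \<Rightarrow> nat" where "c = (\<lambda>k. if from_nat k \<in> T then 0 else 1)"
  have "c \<in> DD \<longleftrightarrow> (\<exists>y. \<forall>n. (pre c n, pre y n) \<in> T)"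
    unfolding DD_def CC_def c_def by auto
  also have "\<dots> \<longleftrightarrow> c \<in> -DD" using K2 keyK by auto
  finally show False by auto
qed


definition ul :: "(nat \<Rightarrow> nat) \<Rightarrow> nat list \<Rightarrow> nat" where
  "ul u = (\<lambda>xs. if length xs = 1 then u (hd xs) else 0)"
definition fxy :: "(nat\<Rightarrow>nat) \<Rightarrow> (nat\<Rightarrow>nat) \<Rightarrow> nat \<Rightarrow> nat" where
  "fxy x y n = (if n mod 3 = 0 \<and> 0 < n then 3 * prod_encode (x (n div 3 - 1), y (n div 3 - 1)) + 1 else 0)"
definition pin :: "nat \<Rightarrow> nat" where
  "pin n = (if n mod 3 = 1 then 3 * fst (prod_decode (n div 3)) + 2 else 0)"
definition gx :: "(nat \<Rightarrow> nat) \<Rightarrow> nat \<Rightarrow> nat" where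
  "gx x n = (if n mod 3 = 0 \<and> 0 < n then 3 * x (n div 3 - 1) + 2 else 0)"
definition Fu :: "(nat \<Rightarrow> nat) set" where
  "Fu = insert pin {fxy x y | x y. (x,y) \<in> CC}"
definition FF :: "op set" where "FF = (\<lambda>u. (1::nat, ul u)) ` Fu"
definition ee :: "(nat \<Rightarrow> nat) \<Rightarrow> op" where "ee x = (1::nat, ul (gx x))"

inductive_set MM :: "(nat \<Rightarrow> nat) set" where
  MM_id: "id \<in> MM"
| MM_step: "f \<in> Fu \<Longrightarrow> w \<in> MM \<Longrightarrow> f \<circ> w \<in> MM"

lemma m31[simp]: "Suc (3*q) mod 3 = 1" by presburger
lemma d31[simp]: "Suc (3*q) div 3 = q" by presburger
lemma m32[simp]: "Suc (Suc (3*q)) mod 3 = 2" by presburger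

lemma gx_comp: "gx x = pin \<circ> fxy x y"
  by (rule ext) (simp add: gx_def pin_def fxy_def)

lemma fxy3: "fxy x y (3*k+3) = 3 * prod_encode (x k, y k) + 1"
  by (simp add: fxy_def)
lemma gx3: "gx x (3*k+3) = 3 * x k + 2"
  by (simp add: gx_def)
lemma fxy_1: "fxy x y (3*q+1) = 0" by (simp add: fxy_def)
lemma fxy_2: "fxy x y (3*q+2) = 0" by (simp add: fxy_def)
lemma fxy_0: "fxy x y 0 = 0" by (simp add: fxy_def)
lemma pin_0: "pin 0 = 0" by (simp add: pin_def)
lemma pin_2: "pin (3*q+2) = 0" by (simp add: pin_def)
lemma pin_3: "pin 3 = 0" by (simp add: pin_def)

lemma Fu_0: "f \<in> Fu \<Longrightarrow> f 0 = 0"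
  by (auto simp: Fu_def fxy_0 pin_0)

lemma MM_cases3: "w \<in> MM \<Longrightarrow> w = id \<or> w 3 = 0 \<or> (\<exists>x y. (x,y)\<in>CC \<and> w = fxy x y)
   \<or> (\<exists>x y. (x,y)\<in>CC \<and> w = pin \<circ> fxy x y)"
proof (induction rule: MM.induct)
  case MM_id then show ?case by simp
next
  case (MM_step f w)
  from MM_step.IH show ?case
  proof (elim disjE exE conjE)
    assume "w = id" then show ?thesis using MM_step.hyps(1) by (auto simp: Fu_def pin_3)
  next
    assume "w 3 = 0" then show ?thesis using Fu_0[OF MM_step.hyps(1)] by simp
  next
    fix x y assume h: "(x,y) \<in> CC" "w = fxy x y"
    have w3: "w 3 = 3 * prod_encode (x 0, y 0) + 1" using h fxy3[of x y 0] by simp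
    show ?thesis using MM_step.hyps(1) unfolding Fu_def
    proof (elim insertE)
      assume "f = pin" then show ?thesis using h by blast
    next
      assume "f \<in> {fxy x y | x y. (x,y) \<in> CC}"
      then obtain x' y' where "f = fxy x' y'" by auto
      then have "f \<circ> w = (\<lambda>_. 0)" using w3 h
        by (auto intro!: ext simp: fxy_1 fxy_def)
      then have "(f \<circ> w) 3 = 0" by simp
      then show ?thesis by blast
    qed
  next
    fix x y assume h: "(x,y) \<in> CC" "w = pin \<circ> fxy x y"
    have w3: "w 3 = 3 * x 0 + 2" using h gx3[of x 0] gx_comp[of x y] by simp
    have "f (w 3) = 0" using MM_step.hyps(1) w3 by (auto simp: Fu_def pin_def fxy_def)
    then have "(f \<circ> w) 3 = 0" by simp
    then show ?thesis by blast
  qed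
qed

lemma MM_comp: "w1 \<in> MM \<Longrightarrow> w2 \<in> MM \<Longrightarrow> w1 \<circ> w2 \<in> MM"
  by (induction rule: MM.induct) (auto simp: comp_assoc intro: MM.intros)

definition C0 :: "op set" where
  "C0 = {(n,h). 1 \<le> n \<and> (\<exists>i<n. \<exists>w\<in>MM. h = (\<lambda>xs. if length xs = n then w (xs!i) else 0))}"

lemma C0_clone: "is_clone C0"
  unfolding is_clone_def
proof (intro conjI allI impI)
  show "C0 \<subseteq> Ops" unfolding C0_def Ops_def by auto
next
  fix n i :: nat assume "1 \<le> n \<and> i < n"
  then show "proj n i \<in> C0" unfolding proj_def C0_def by (auto intro!: exI[of _ i] bexI[of _ id] MM_id)
next
  fix n f m gs
  assume a: "(n, f) \<in> C0 \<and> length gs = n \<and> (\<forall>g\<in>set gs. (m, g) \<in> C0)"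
  then obtain i w where i: "i < n" "w \<in> MM" "f = (\<lambda>xs. if length xs = n then w (xs!i) else 0)"
    unfolding C0_def by auto
  have "gs ! i \<in> set gs" using a i by auto
  then have "(m, gs ! i) \<in> C0" using a by blast
  then obtain i' w' where i': "1 \<le> m" "i' < m" "w' \<in> MM" "gs ! i = (\<lambda>xs. if length xs = m then w' (xs!i') else 0)"
    unfolding C0_def by auto
  have "comp_op (n,f) m gs = (m, \<lambda>xs. if length xs = m then (w \<circ> w') (xs!i') else 0)"
    unfolding comp_op_def using a i i' by (auto intro!: ext)
  moreover have "w \<circ> w' \<in> MM" using MM_comp i i' by blast
  moreover have "(m, \<lambda>xs. if length xs = m then (w \<circ> w') (xs!i') else 0) \<in> C0"
    unfolding C0_def using i' \<open>w \<circ> w' \<in> MM\<close> by blast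
  ultimately show "comp_op (n,f) m gs \<in> C0" by simp
qed

lemma ul_nth: "ul u = (\<lambda>xs. if length xs = 1 then (u \<circ> id) (xs!0) else 0)"
  unfolding ul_def by (auto intro!: ext simp: hd_conv_nth length_Suc_conv)

lemma FF_C0: "FF \<subseteq> C0"
proof
  fix p assume "p \<in> FF"
  then obtain u where u: "u \<in> Fu" "p = (1, ul u)" unfolding FF_def by auto
  have "u \<circ> id \<in> MM" using u MM_id MM_step by blast
  then show "p \<in> C0" unfolding C0_def u(2) using ul_nth[of u] by auto
qed

lemma clone_C0: "term_clone FF \<subseteq> C0"
  unfolding term_clone_def using C0_clone FF_C0 by blast

lemma DD_iff: "x \<in> DD \<longleftrightarrow> ee x \<in> term_clone FF"
proof
  assume "x \<in> DD"
  then obtain y where y: "(x,y) \<in> CC" unfolding DD_def by auto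
  have eq: "comp_op (1, ul pin) 1 [ul (fxy x y)] = ee x"
    unfolding comp_op_def ee_def ul_def gx_comp[of x y] by (auto intro!: ext)
  show "ee x \<in> term_clone FF"
    unfolding term_clone_def
  proof
    fix C assume "C \<in> {C. is_clone C \<and> FF \<subseteq> C}"
    then have C: "is_clone C" "FF \<subseteq> C" by auto
    have "(1, ul pin) \<in> C" "(1, ul (fxy x y)) \<in> C" using C(2) y unfolding FF_def Fu_def by auto
    moreover from C(1) have cl: "\<And>f m gs. (length gs, f) \<in> C \<Longrightarrow> \<forall>g\<in>set gs. (m,g) \<in> C \<Longrightarrow> comp_op (length gs, f) m gs \<in> C"
      unfolding is_clone_def by blast
    ultimately have "comp_op (1, ul pin) 1 [ul (fxy x y)] \<in> C" using cl[of "[ul (fxy x y)]" "ul pin" 1] by simp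
    then show "ee x \<in> C" using eq by simp
  qed
next
  assume "ee x \<in> term_clone FF"
  then have "ee x \<in> C0" using clone_C0 by blast
  then obtain w where w: "w \<in> MM" "ul (gx x) = (\<lambda>xs. if length xs = 1 then w (xs!0) else 0)"
    unfolding C0_def ee_def by auto
  have gw: "gx x = w"
  proof
    fix n show "gx x n = w n" using fun_cong[OF w(2), of "[n]"] by (simp add: ul_def)
  qed
  have g3: "w 3 = 3 * x 0 + 2" using gw gx3[of x 0] by simp
  from MM_cases3[OF w(1)] show "x \<in> DD"
  proof (elim disjE exE conjE)
    assume "w = id" then show ?thesis using g3 by simp
  next
    assume "w 3 = 0" then show ?thesis using g3 by simp
  next
    fix x' y' assume "w = fxy x' y'" then have "3 * x 0 + 2 = 3 * prod_encode (x' 0, y' 0) + 1" using g3 fxy3[of x' y' 0] by simp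
    then have False by presburger
    then show ?thesis ..
  next
    fix x' y' assume h: "(x',y') \<in> CC" "w = pin \<circ> fxy x' y'"
    then have "gx x = gx x'" using gw gx_comp by metis
    then have "x = x'" using gx3 by (metis add_right_imp_eq mult_left_cancel zero_neq_numeral ext)
    then show ?thesis using h unfolding DD_def by auto
  qed
qed


definition dx :: "(nat \<Rightarrow> nat) \<Rightarrow> nat \<Rightarrow> nat" where "dx u k = fst (prod_decode (u (3*k+3) div 3))"
definition dy :: "(nat \<Rightarrow> nat) \<Rightarrow> nat \<Rightarrow> nat" where "dy u k = snd (prod_decode (u (3*k+3) div 3))"

lemma agree_dec: assumes "agree N u (fxy x' y')" "3*k+3 < N"
  shows "x' k = dx u k \<and> y' k = dy u k"
proof -
  have "u (3*k+3) = fxy x' y' (3*k+3)" using assms unfolding agree_def by blast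
  then show ?thesis unfolding dx_def dy_def fxy3 by simp
qed

lemma fxy_local: assumes "\<And>k. 3*k+3 \<le> q \<Longrightarrow> x' k = x k \<and> y' k = y k"
  shows "fxy x' y' q = fxy x y q"
proof (cases "q mod 3 = 0 \<and> 0 < q")
  case True
  then have "3 * (q div 3 - 1) + 3 = q" by presburger
  then have "x' (q div 3 - 1) = x (q div 3 - 1) \<and> y' (q div 3 - 1) = y (q div 3 - 1)"
    using assms by (metis order_refl)
  then show ?thesis unfolding fxy_def by simp
next
  case False show ?thesis unfolding fxy_def if_not_P[OF False] by (rule refl)
qed

definition Fc where "Fc = {fxy x y | x y. (x,y) \<in> CC}"

lemma Fc_closed: assumes "u \<notin> Fc" shows "\<exists>N. \<forall>v. agree N u v \<longrightarrow> v \<notin> Fc"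
proof (cases "u = fxy (dx u) (dy u)")
  case False
  then obtain q where q: "u q \<noteq> fxy (dx u) (dy u) q" by auto
  show ?thesis
  proof (intro exI allI impI)
    fix v assume a: "agree (Suc q) u v"
    show "v \<notin> Fc"
    proof
      assume "v \<in> Fc"
      then obtain x' y' where v: "v = fxy x' y'" unfolding Fc_def by auto
      have "fxy x' y' q = fxy (dx u) (dy u) q"
        by (rule fxy_local) (use agree_dec[of "Suc q" u x' y'] a v in auto)
      moreover have "v q = u q" using a unfolding agree_def by auto
      ultimately show False using q v by simp
    qed
  qed
next
  case True
  define x where "x = dx u"
  define y where "y = dy u"
  have "(x,y) \<notin> CC" using True assms unfolding Fc_def x_def y_def by auto
  then obtain n where n: "x (to_nat (pre x n, pre y n)) \<noteq> 0" unfolding CC_def by auto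
  define j where "j = to_nat (pre x n, pre y n)"
  show ?thesis
  proof (intro exI allI impI)
    fix v assume a: "agree (3*(n+j)+4) u v"
    show "v \<notin> Fc"
    proof
      assume "v \<in> Fc"
      then obtain x' y' where v: "v = fxy x' y'" "(x',y') \<in> CC" unfolding Fc_def by auto
      have e: "x' k = x k \<and> y' k = y k" if "k \<le> n + j" for k
        using agree_dec[of "3*(n+j)+4" u x' y' k] a v that unfolding x_def y_def by auto
      have "pre x' n = pre x n" "pre y' n = pre y n" unfolding pre_def using e by auto
      moreover have "x' j = x j" using e by auto
      ultimately have "x' (to_nat (pre x' n, pre y' n)) \<noteq> 0" using n unfolding j_def by simp
      then show False using v(2) unfolding CC_def by auto
    qed
  qed
qed

lemma Fu_closed: assumes "u \<notin> Fu" shows "\<exists>N. \<forall>v. agree N u v \<longrightarrow> v \<notin> Fu"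
proof -
  have "u \<noteq> pin" "u \<notin> Fc" using assms unfolding Fu_def Fc_def by auto
  then obtain p where p: "u p \<noteq> pin p" by auto
  obtain N where N: "\<forall>v. agree N u v \<longrightarrow> v \<notin> Fc" using Fc_closed \<open>u \<notin> Fc\<close> by blast
  show ?thesis
  proof (intro exI allI impI)
    fix v assume a: "agree (max N (Suc p)) u v"
    then have "agree N u v" "v p = u p" unfolding agree_def by auto
    then show "v \<notin> Fu" using N p unfolding Fu_def Fc_def by auto
  qed
qed

lemma Ops_ul: "(1,f) \<in> Ops \<Longrightarrow> f = ul (\<lambda>k. f [k])"
  unfolding Ops_def ul_def by (auto intro!: ext simp: length_Suc_conv)

lemma ul_inj: assumes "ul v = ul w" shows "v = w"
proof
  fix k show "v k = w k" using fun_cong[OF assms, of "[k]"] by (simp add: ul_def)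
qed

lemma FF_Ops: "FF \<subseteq> Ops" unfolding FF_def Ops_def ul_def by auto

lemma FF_closed: "closedO FF"
  unfolding closedO_def
proof (intro conjI)
  show "FF \<subseteq> Ops" by (rule FF_Ops)
  show "openO (Ops - FF)" unfolding openO_def
  proof (intro conjI allI impI)
    show "Ops - FF \<subseteq> Ops" by auto
  next
    fix n f assume nf: "(n,f) \<in> Ops - FF"
    show "\<exists>S. finite S \<and> (\<forall>xs\<in>S. length xs = n) \<and>
             (\<forall>g. (n, g) \<in> Ops \<and> (\<forall>xs\<in>S. g xs = f xs) \<longrightarrow> (n, g) \<in> Ops - FF)"
    proof (cases "n = 1")
      case False
      then show ?thesis by (intro exI[of _ "{}"]) (auto simp: FF_def)
    next
      case True
      define u where "u = (\<lambda>k. f [k])"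
      have fu: "f = ul u" using nf True Ops_ul unfolding u_def by auto
      have "u \<notin> Fu" using nf fu True unfolding FF_def by auto
      then obtain N where N: "\<forall>v. agree N u v \<longrightarrow> v \<notin> Fu" using Fu_closed by blast
      show ?thesis
      proof (intro exI[of _ "(\<lambda>k. [k]) ` {..<N}"] conjI allI impI)
        show "finite ((\<lambda>k. [k]) ` {..<N})" by simp
        show "\<forall>xs\<in>(\<lambda>k. [k]) ` {..<N}. length xs = n" using True by auto
      next
        fix g assume g: "(n, g) \<in> Ops \<and> (\<forall>xs\<in>(\<lambda>k. [k]) ` {..<N}. g xs = f xs)"
        define v where "v = (\<lambda>k. g [k])"
        have gv: "g = ul v" using g True Ops_ul unfolding v_def by auto
        have "agree N u v" using g unfolding agree_def u_def v_def by auto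
        then have "v \<notin> Fu" using N by blast
        then have "(1, g) \<notin> FF" unfolding FF_def gv using ul_inj by blast
        then show "(n, g) \<in> Ops - FF" using g True by auto
      qed
    qed
  qed
qed

lemma ee_Ops: "ee x \<in> Ops" unfolding ee_def Ops_def ul_def by auto

lemma ee_open: assumes "openO U" shows "openN {x. ee x \<in> U}"
  unfolding openN_def
proof
  fix x assume "x \<in> {x. ee x \<in> U}"
  then have "(1, ul (gx x)) \<in> U" unfolding ee_def by simp
  then obtain S where S: "finite S" "\<forall>xs\<in>S. length xs = 1"
     "\<forall>g. (1, g) \<in> Ops \<and> (\<forall>xs\<in>S. g xs = ul (gx x) xs) \<longrightarrow> (1, g) \<in> U"
    using assms unfolding openO_def by blast
  obtain B where B: "hd ` S \<subseteq> {..<B}" using finite_nat_bounded S(1) by blast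
  show "\<exists>N. \<forall>x'. agree N x x' \<longrightarrow> x' \<in> {x. ee x \<in> U}"
  proof (intro exI allI impI)
    fix x' assume a: "agree B x x'"
    have "ul (gx x') s = ul (gx x) s" if s: "s \<in> S" for s
    proof -
      have hb: "hd s < B" using B s by auto
      have "gx x' (hd s) = gx x (hd s)"
      proof (cases "hd s mod 3 = 0 \<and> 0 < hd s")
        case True
        then have "hd s div 3 - 1 < B" using hb by linarith
        then show ?thesis using a unfolding gx_def agree_def by simp
      next
        case False show ?thesis unfolding gx_def if_not_P[OF False] by (rule refl)
      qed
      then show ?thesis unfolding ul_def by simp
    qed
    then have "(1, ul (gx x')) \<in> U" using S(3) ee_Ops[of x'] unfolding ee_def by blast
    then show "x' \<in> {x. ee x \<in> U}" unfolding ee_def by simp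
  qed
qed

lemma sig_analytic: "B \<in> sigma_sets Ops {U. openO U} \<Longrightarrow>
   analytic {x. ee x \<in> B} \<and> analytic {x. ee x \<notin> B}"
proof (induction rule: sigma_sets.induct)
  case (Basic a)
  then have o: "openN {x. ee x \<in> a}" using ee_open by blast
  have "{x. ee x \<notin> a} = - {x. ee x \<in> a}" by auto
  then show ?case using analytic_open[OF o] analytic_closed_compl[OF o] by simp
next
  case Empty
  have "openN {}" "openN UNIV" unfolding openN_def by auto
  then show ?case using analytic_open by simp
next
  case (Compl a)
  have "{x. ee x \<in> Ops - a} = {x. ee x \<notin> a}" "{x. ee x \<notin> Ops - a} = {x. ee x \<in> a}"
    using ee_Ops by auto
  then show ?case using Compl.IH by simp
next
  case (Union A)
  have "{x. ee x \<in> \<Union>(range A)} = (\<Union>i. {x. ee x \<in> A i})"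
       "{x. ee x \<notin> \<Union>(range A)} = (\<Inter>i. {x. ee x \<notin> A i})" by auto
  then show ?case using analytic_UN[of "\<lambda>i. {x. ee x \<in> A i}"] analytic_INT[of "\<lambda>i. {x. ee x \<notin> A i}"]
    Union.IH by simp
qed

theorem mainTheorem1:
  shows "\<exists>F. F \<subseteq> Ops \<and> closedO F \<and> (\<forall>p\<in>F. fst p = 1) \<and> \<not> borelO (term_clone F)"
proof (intro exI conjI)
  show "FF \<subseteq> Ops" by (rule FF_Ops)
  show "closedO FF" by (rule FF_closed)
  show "\<forall>p\<in>FF. fst p = 1" by (auto simp: FF_def)
  show "\<not> borelO (term_clone FF)"
  proof
    assume "borelO (term_clone FF)"
    then have "analytic {x. ee x \<notin> term_clone FF}" using sig_analytic unfolding borelO_def by blast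
    moreover have "{x. ee x \<notin> term_clone FF} = -DD" using DD_iff by auto
    ultimately show False using not_analytic_compl_DD by simp
  qed
qed

end
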